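(* There is a universal constant $c>0$ such that the following holds. Let $\mathbf x\sim\mathcal N(0,I_p)$ and let $v$ be uniform on $[s,t]$ with $0\le s<t$, independent of $\mathbf x$. For $\mathbf u\in\mathbb R^p$ and $b\in\mathbb R$, let $\mathbf a=b\,\mathbb I(|b+\langle\mathbf x,\mathbf u\rangle|<v)\,\mathbf x$. Then for every $\mathbf t'\in\mathbb R^p$, $$\mathbb E\big[e^{\langle\mathbf t',\mathbf a-\mathbb E[\mathbf a]\rangle}\big]\le e^{c\,b^2\|\mathbf t'\|^2/2}.$$
   Context: $\mathbb I(\cdot)$ is the indicator function; $\|\cdot\|$ is the Euclidean norm. *)

theory Defs
  imports "HOL-Probability.Probability"
begin

text \<open>Standard Gaussian vector N(0, I_p), realised on functions nat => real
  supported on the index set {..<p}.\<close>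
definition gauss_vec :: "nat \<Rightarrow> (nat \<Rightarrow> real) measure" where
  "gauss_vec p = PiM {..<p} (\<lambda>_. density lborel std_normal_density)"

definition joint_law :: "nat \<Rightarrow> real \<Rightarrow> real \<Rightarrow> ((nat \<Rightarrow> real) \<times> real) measure" where
  "joint_law p s t = gauss_vec p \<Otimes>\<^sub>M uniform_measure lborel {s..t}"

definition inner_p :: "nat \<Rightarrow> (nat \<Rightarrow> real) \<Rightarrow> (nat \<Rightarrow> real) \<Rightarrow> real" where
  "inner_p p x y = (\<Sum>j<p. x j * y j)"

definition norm_p :: "nat \<Rightarrow> (nat \<Rightarrow> real) \<Rightarrow> real" where
  "norm_p p x = sqrt (\<Sum>j<p. (x j)\<^sup>2)"

definition avec :: "nat \<Rightarrow> (nat \<Rightarrow> real) \<Rightarrow> real \<Rightarrow> (nat \<Rightarrow> real) \<times> real \<Rightarrow> nat \<Rightarrow> real" where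
  "avec p u b \<omega> i = b * indicator {w. \<bar>b + inner_p p (fst \<omega>) u\<bar> < snd \<omega>} \<omega> * fst \<omega> i"

end

theory Submission
  imports Defs
begin

abbreviation "NN \<equiv> density lborel std_normal_density"

lemma prob_NN: "prob_space NN"
  by (rule prob_space_normal_density) simp

lemma mgf1: "(\<integral>\<^sup>+x. ennreal (exp (m*x)) \<partial>NN) = ennreal (exp (m\<^sup>2/2))"
proof -
  have eq: "std_normal_density x * exp (m*x) = exp (m\<^sup>2/2) * normal_density m 1 x" for x
  proof -
    have "exp (- x\<^sup>2/2) * exp (m*x) = exp (m\<^sup>2/2) * exp (- (x-m)\<^sup>2/2)"
      unfolding exp_add[symmetric] by (rule arg_cong[where f=exp]) (simp add: power2_eq_square field_simps)
    then show ?thesis unfolding normal_density_def by simp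
  qed
  have "(\<integral>\<^sup>+x. ennreal (exp (m*x)) \<partial>NN) = (\<integral>\<^sup>+x. ennreal (std_normal_density x) * ennreal (exp (m*x)) \<partial>lborel)"
    by (subst nn_integral_density) auto
  also have "\<dots> = (\<integral>\<^sup>+x. ennreal (exp (m\<^sup>2/2)) * ennreal (normal_density m 1 x) \<partial>lborel)"
    by (intro nn_integral_cong) (simp add: ennreal_mult[symmetric] eq)
  also have "\<dots> = ennreal (exp (m\<^sup>2/2)) * (\<integral>\<^sup>+x. ennreal (normal_density m 1 x) \<partial>lborel)"
    by (subst nn_integral_cmult) auto
  also have "(\<integral>\<^sup>+x. ennreal (normal_density m 1 x) \<partial>lborel) = 1"
    by (subst nn_integral_eq_integral) auto
  finally show ?thesis by simp
qed

lemma prob_G: "prob_space (gauss_vec p)"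
  unfolding gauss_vec_def by (intro prob_space_PiM prob_NN)


lemma mgfG:
  "(\<integral>\<^sup>+x. ennreal (exp (\<Sum>j<p. l * w j * x j)) \<partial>gauss_vec p) = ennreal (exp (l\<^sup>2 * (\<Sum>j<p. (w j)\<^sup>2) / 2))"
proof -
  interpret product_sigma_finite "\<lambda>_. NN"
    unfolding product_sigma_finite_def using prob_NN prob_space_imp_sigma_finite by blast
  have "(\<integral>\<^sup>+x. ennreal (exp (\<Sum>j<p. l * w j * x j)) \<partial>gauss_vec p)
     = (\<integral>\<^sup>+x. (\<Prod>j\<in>{..<p}. (\<lambda>j y. ennreal (exp (l * w j * y))) j (x j)) \<partial>gauss_vec p)"
    by (simp add: exp_sum prod_ennreal)
  also have "\<dots> = (\<Prod>j\<in>{..<p}. ennreal (exp ((l * w j)\<^sup>2/2)))"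
    unfolding gauss_vec_def by (subst product_nn_integral_prod) (auto simp: mgf1)
  also have "\<dots> = ennreal (exp (l\<^sup>2 * (\<Sum>j<p. (w j)\<^sup>2) / 2))"
    by (simp add: prod_ennreal exp_sum[symmetric] sum_divide_distrib sum_distrib_left power_mult_distrib)
  finally show ?thesis .
qed



lemma comp_G: "j < p \<Longrightarrow> distr (gauss_vec p) NN (\<lambda>x. x j) = NN"
  unfolding gauss_vec_def
  by (rule distr_PiM_component[where M="\<lambda>_. NN"]) (simp_all add: prob_NN)

lemma int_NN: "integrable NN (\<lambda>x. x)" "integral\<^sup>L NN (\<lambda>x. x) = 0"
  using integrable_std_normal_moment[of 1] integral_std_normal_moment_odd[of 0]
  by (auto simp: integrable_density integral_density)

lemma int_G: "j < p \<Longrightarrow> integrable (gauss_vec p) (\<lambda>x. x j)"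
  "j < p \<Longrightarrow> integral\<^sup>L (gauss_vec p) (\<lambda>x. x j) = 0"
proof -
  assume j: "j < p"
  have m: "(\<lambda>x. x j) \<in> measurable (gauss_vec p) NN"
    unfolding gauss_vec_def by (rule measurable_component_singleton) (use j in auto)
  have mi: "(\<lambda>x::real. x) \<in> borel_measurable NN" by simp
  have i1: "integrable (distr (gauss_vec p) NN (\<lambda>x. x j)) (\<lambda>x. x)"
    unfolding comp_G[OF j] by (rule int_NN)
  show "integrable (gauss_vec p) (\<lambda>x. x j)"
    using iffD1[OF integrable_distr_eq[OF m mi] i1] .
  have "integral\<^sup>L (gauss_vec p) (\<lambda>x. x j) = integral\<^sup>L (distr (gauss_vec p) NN (\<lambda>x. x j)) (\<lambda>x. x)"
    by (rule integral_distr[OF m, symmetric]) simp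
  also have "\<dots> = 0" unfolding comp_G[OF j] by (rule int_NN)
  finally show "integral\<^sup>L (gauss_vec p) (\<lambda>x. x j) = 0" .
qed

lemma final_ineq:
  fixes q m A :: real
  assumes q: "q \<ge> 0" and mA: "\<bar>m\<bar> \<le> A" and eA: "exp A \<le> 2 * exp q"
  shows "exp (-m) * (exp q + m) \<le> exp (4*q)"
proof -
  have 1: "exp (-m) * (1+m) \<le> 1"
  proof -
    have "exp (-m) * (1+m) \<le> exp (-m) * exp m"
      by (intro mult_left_mono) (auto simp: exp_ge_add_one_self add.commute)
    also have "\<dots> = 1" by (simp add: exp_minus field_simps)
    finally show ?thesis .
  qed
  have 2: "exp (-m) \<le> exp A" using mA by simp
  have 3: "exp q - 1 \<le> q * exp q"
  proof -
    have "1 - q \<le> exp (-q)" using exp_ge_add_one_self[of "-q"] by simp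
    then have "(1 - q) * exp q \<le> exp (-q) * exp q" by (intro mult_right_mono) auto
    then show ?thesis by (simp add: exp_minus field_simps)
  qed
  have 4: "0 \<le> exp q - 1" using q by simp
  have "exp (-m) * (exp q - 1) \<le> exp A * (exp q - 1)" using 2 4 by (intro mult_right_mono) auto
  also have "\<dots> \<le> (2 * exp q) * (q * exp q)"
    by (rule mult_mono[OF eA 3]) (use 4 in auto)
  also have "\<dots> = 2 * q * (exp q * exp q)" by (simp only: ac_simps)
  also have "\<dots> = 2 * q * exp (2*q)" by (simp only: mult_2 exp_add)
  finally have 5: "exp (-m) * (exp q - 1) \<le> 2 * q * exp (2*q)" .
  have e1: "1 \<le> exp (2*q)" using q by simp
  have "exp (-m) * (exp q + m) = exp (-m) * (1+m) + exp (-m) * (exp q - 1)" by (simp add: algebra_simps)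
  also have "\<dots> \<le> 1 + 2 * q * exp (2*q)" using 1 5 by linarith
  also have "\<dots> \<le> (1 + 2*q) * exp (2*q)" using e1 by (simp add: distrib_right)
  also have "\<dots> \<le> exp (2*q) * exp (2*q)" by (intro mult_right_mono) (auto simp: exp_ge_add_one_self add.commute)
  also have "\<dots> = exp (4*q)" by (simp only: exp_add[symmetric]) simp
  finally show ?thesis .
qed




lemma mz_G: "(\<lambda>x. \<Sum>j<p. w j * x j) \<in> borel_measurable (gauss_vec p)"
  unfolding gauss_vec_def
  by (intro borel_measurable_sum borel_measurable_times borel_measurable_const measurable_component_singleton) auto

lemma mcomp_G: assumes "j < p" shows "(\<lambda>x. x j) \<in> borel_measurable (gauss_vec p)"
proof -
  have m: "(\<lambda>x. x j) \<in> measurable (gauss_vec p) NN"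
    unfolding gauss_vec_def by (rule measurable_component_singleton) (use assms in auto)
  have mi: "(\<lambda>x::real. x) \<in> borel_measurable NN" by simp
  show ?thesis using measurable_compose[OF m mi] by simp
qed

lemma prob_U: "s < t \<Longrightarrow> prob_space (uniform_measure lborel {s..t::real})"
  by (rule prob_space_uniform_measure) auto

lemma distr_J: assumes "s < t" shows "distr (joint_law p s t) (gauss_vec p) fst = gauss_vec p"
proof -
  interpret U: prob_space "uniform_measure lborel {s..t}" using prob_U[OF assms] .
  interpret G: prob_space "gauss_vec p" using prob_G .
  show ?thesis unfolding joint_law_def by (rule U.distr_pair_fst)
qed

lemma fst_meas: "fst \<in> measurable (joint_law p s t) (gauss_vec p)"
  unfolding joint_law_def by (rule measurable_fst)

lemma tr:
  assumes "s < t" "f \<in> borel_measurable (gauss_vec p)"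
  shows "integrable (joint_law p s t) (\<lambda>\<omega>. f (fst \<omega>)) \<longleftrightarrow> integrable (gauss_vec p) (f::_\<Rightarrow>real)"
    and "(\<integral>\<omega>. f (fst \<omega>) \<partial>joint_law p s t) = (\<integral>x. f x \<partial>gauss_vec p)"
  using integrable_distr_eq[OF fst_meas[of p s t] assms(2)] integral_distr[OF fst_meas[of p s t] assms(2)] distr_J[OF assms(1), of p]
  by auto

lemma mgf_int:
  fixes l :: real and w :: "nat \<Rightarrow> real"
  shows
  "integrable (gauss_vec p) (\<lambda>x. exp (l * (\<Sum>j<p. w j * x j)))"
  "(\<integral>x. exp (l * (\<Sum>j<p. w j * x j)) \<partial>gauss_vec p) = exp (l\<^sup>2 * (\<Sum>j<p. (w j)\<^sup>2) / 2)"
proof -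
  have m: "(\<lambda>x. exp (l * (\<Sum>j<p. w j * x j))) \<in> borel_measurable (gauss_vec p)"
    using mz_G[of w p] by measurable
  have "(\<integral>\<^sup>+x. ennreal (exp (l * (\<Sum>j<p. w j * x j))) \<partial>gauss_vec p) = ennreal (exp (l\<^sup>2 * (\<Sum>j<p. (w j)\<^sup>2) / 2))"
    using mgfG[where l=l and w=w and p=p] by (simp add: sum_distrib_left mult.assoc)
  then have "integrable (gauss_vec p) (\<lambda>x. exp (l * (\<Sum>j<p. w j * x j))) \<and>
    (\<integral>x. exp (l * (\<Sum>j<p. w j * x j)) \<partial>gauss_vec p) = exp (l\<^sup>2 * (\<Sum>j<p. (w j)\<^sup>2) / 2)"
    by (subst (asm) nn_integral_eq_integrable) (use m in auto)
  then show "integrable (gauss_vec p) (\<lambda>x. exp (l * (\<Sum>j<p. w j * x j)))"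
    "(\<integral>x. exp (l * (\<Sum>j<p. w j * x j)) \<partial>gauss_vec p) = exp (l\<^sup>2 * (\<Sum>j<p. (w j)\<^sup>2) / 2)" by auto
qed

lemma z_int:
  "integrable (gauss_vec p) (\<lambda>x. \<Sum>j<p. w j * x j)"
  "(\<integral>x. (\<Sum>j<p. w j * x j) \<partial>gauss_vec p) = 0"
  using int_G by (auto simp: integral_sum)



lemma inner_meas: "(\<lambda>x. inner_p p x u) \<in> borel_measurable (gauss_vec p)"
  using mz_G[of u p] unfolding inner_p_def by (simp add: mult.commute)

lemma snd_meas: "snd \<in> borel_measurable (joint_law p s t)"
proof -
  have "(\<lambda>x::real. x) \<in> borel_measurable (uniform_measure lborel {s..t})" by simp
  then show ?thesis unfolding joint_law_def using measurable_snd measurable_compose by blast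
qed

theorem mainTheorem9:
  shows "\<exists>c>0. \<forall>(p::nat) (s::real) (t::real) (u::nat \<Rightarrow> real) (b::real) (t'::nat \<Rightarrow> real).
     0 \<le> s \<longrightarrow> s < t \<longrightarrow>
     (\<integral>\<^sup>+ \<omega>. ennreal (exp (\<Sum>i<p. t' i *
          (avec p u b \<omega> i - (\<integral>\<omega>'. avec p u b \<omega>' i \<partial>joint_law p s t)))) \<partial>joint_law p s t)
       \<le> ennreal (exp (c * b\<^sup>2 * (norm_p p t')\<^sup>2 / 2))"
proof (rule exI[of _ "4::real"], intro conjI allI impI)
  show "(0::real) < 4" by simp
next
  fix p :: nat and s t :: real and u :: "nat \<Rightarrow> real" and b :: real and t' :: "nat \<Rightarrow> real"
  assume s0: "0 \<le> s" and st: "s < t"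
  define J where "J = joint_law p s t"
  define G where "G = gauss_vec p"
  define z where "z = (\<lambda>x. \<Sum>j<p. t' j * x j)"
  define ind where "ind = (\<lambda>\<omega>. indicator {w. \<bar>b + inner_p p (fst w) u\<bar> < snd w} \<omega> :: real)"
  define Z where "Z = (\<lambda>\<omega>. b * ind \<omega> * z (fst \<omega>))"
  define \<sigma>2 where "\<sigma>2 = (\<Sum>j<p. (t' j)\<^sup>2)"
  define q where "q = b\<^sup>2 * \<sigma>2 / 2"
  have \<sigma>2_nn: "0 \<le> \<sigma>2" unfolding \<sigma>2_def by (intro sum_nonneg) auto
  have q_nn: "0 \<le> q" unfolding q_def using \<sigma>2_nn by simp
  interpret G: prob_space G unfolding G_def by (rule prob_G)
  have fstm: "fst \<in> measurable J G" unfolding J_def G_def by (rule fst_meas)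
  have trI: "integrable J (\<lambda>\<omega>. f (fst \<omega>)) \<longleftrightarrow> integrable G f"
    and trE: "(\<integral>\<omega>. f (fst \<omega>) \<partial>J) = (\<integral>x. f x \<partial>G)"
    if "f \<in> borel_measurable G" for f :: "_ \<Rightarrow> real"
    using tr[OF st, of f p] that unfolding J_def G_def by auto
  have mz: "z \<in> borel_measurable G" unfolding z_def G_def by (rule mz_G)
  have mzJ: "(\<lambda>\<omega>. z (fst \<omega>)) \<in> borel_measurable J" using measurable_compose[OF fstm mz] .
  have mcJ: "(\<lambda>\<omega>. fst \<omega> i) \<in> borel_measurable J" if "i < p" for i
    using measurable_compose[OF fstm mcomp_G[OF that, folded G_def]] .
  have minn: "(\<lambda>\<omega>. \<bar>b + inner_p p (fst \<omega>) u\<bar>) \<in> borel_measurable J"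
    using measurable_compose[OF fstm inner_meas[of p u, folded G_def]] by measurable
  have msnd: "snd \<in> borel_measurable J" unfolding J_def by (rule snd_meas)
  have mind: "ind \<in> borel_measurable J"
  proof -
    have "{w. \<bar>b + inner_p p (fst w) u\<bar> < snd w} \<inter> space J = {w \<in> space J. \<bar>b + inner_p p (fst w) u\<bar> < snd w}"
      by auto
    also have "\<dots> \<in> sets J" by (rule borel_measurable_less[OF minn msnd])
    finally show ?thesis unfolding ind_def by (subst borel_measurable_indicator_iff)
  qed
  have ind01: "ind \<omega> = 0 \<or> ind \<omega> = 1" for \<omega> unfolding ind_def by (auto split: split_indicator)
  have avec_eq: "(\<lambda>\<omega>. avec p u b \<omega> i) = (\<lambda>\<omega>. b * ind \<omega> * fst \<omega> i)" for i
    unfolding avec_def ind_def by (auto split: split_indicator)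
  have avec_pt: "avec p u b \<omega> i = b * ind \<omega> * fst \<omega> i" for \<omega> i
    using fun_cong[OF avec_eq[of i], of \<omega>] by simp
  have icJ: "integrable J (\<lambda>\<omega>. fst \<omega> i)" if "i < p" for i
    using trI[OF mcomp_G[OF that, folded G_def]] int_G(1)[OF that] unfolding G_def by simp
  have iavec: "integrable J (\<lambda>\<omega>. avec p u b \<omega> i)" if "i < p" for i
    unfolding avec_eq
  proof (rule Bochner_Integration.integrable_bound[OF integrable_mult_right[OF icJ[OF that], of b]])
    show "(\<lambda>\<omega>. b * ind \<omega> * fst \<omega> i) \<in> borel_measurable J" using mind mcJ[OF that] by measurable
    show "AE \<omega> in J. norm (b * ind \<omega> * fst \<omega> i) \<le> norm (b * fst \<omega> i)"
    proof (rule AE_I2)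
      fix \<omega> show "norm (b * ind \<omega> * fst \<omega> i) \<le> norm (b * fst \<omega> i)"
        using ind01[of \<omega>] by (auto simp: abs_mult)
    qed
  qed
  define Mi where "Mi = (\<lambda>i. \<integral>\<omega>'. avec p u b \<omega>' i \<partial>J)"
  define m where "m = (\<Sum>i<p. t' i * Mi i)"
  have Zsum: "Z \<omega> = (\<Sum>i<p. t' i * avec p u b \<omega> i)" for \<omega>
    unfolding Z_def z_def avec_pt
    by (simp add: sum_distrib_left mult.assoc mult.left_commute)
  have key1: "(\<Sum>i<p. t' i * (avec p u b \<omega> i - Mi i)) = Z \<omega> - m" for \<omega>
    unfolding Zsum m_def by (simp add: right_diff_distrib sum_subtractf)
  have iZ: "integrable J Z" unfolding Zsum[abs_def] using iavec by auto
  have isum: "(\<integral>\<omega>. (\<Sum>i<p. t' i * avec p u b \<omega> i) \<partial>J) = (\<Sum>i<p. \<integral>\<omega>. t' i * avec p u b \<omega> i \<partial>J)"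
    by (rule Bochner_Integration.integral_sum) (use iavec in auto)
  have mZ: "m = (\<integral>\<omega>. Z \<omega> \<partial>J)" unfolding Zsum m_def Mi_def isum by simp
  have mexp: "(\<lambda>x. exp (l * z x)) \<in> borel_measurable G" for l using mz by measurable
  have iexpJ: "integrable J (\<lambda>\<omega>. exp (l * z (fst \<omega>)))" for l
    using trI[OF mexp] mgf_int(1)[of p l t'] unfolding G_def z_def by simp
  have eexpG: "(\<integral>x. exp (l * z x) \<partial>G) = exp (l\<^sup>2 * \<sigma>2 / 2)" for l
    using mgf_int(2)[of p l t'] unfolding G_def z_def \<sigma>2_def by simp
  have eexpJ: "(\<integral>\<omega>. exp (b * z (fst \<omega>)) \<partial>J) = exp q"
    using trE[OF mexp] eexpG[of b] unfolding q_def by simp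
  have izG: "integrable G z" "(\<integral>x. z x \<partial>G) = 0"
    using z_int[of p t'] unfolding G_def z_def by auto
  have izJ: "integrable J (\<lambda>\<omega>. b * z (fst \<omega>))" using trI[OF mz] izG by simp
  have ezJ: "(\<integral>\<omega>. b * z (fst \<omega>) \<partial>J) = 0" using trE[OF mz] izG by simp
  define H where "H = (\<lambda>\<omega>. exp (b * z (fst \<omega>)) + Z \<omega> - b * z (fst \<omega>))"
  have iH: "integrable J H" unfolding H_def using iexpJ iZ izJ by auto
  have eH: "(\<integral>\<omega>. H \<omega> \<partial>J) = exp q + m"
    unfolding H_def using iexpJ iZ izJ eexpJ ezJ mZ by simp
  have ptw: "exp (Z \<omega>) \<le> H \<omega>" for \<omega>
    using ind01[of \<omega>]
  proof
    assume "ind \<omega> = 0"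
    have e: "1 + b * z (fst \<omega>) \<le> exp (b * z (fst \<omega>))" by (rule exp_ge_add_one_self)
    from \<open>ind \<omega> = 0\<close> have "Z \<omega> = 0" unfolding Z_def by simp
    then have "exp (Z \<omega>) = 1" by simp
    then show ?thesis unfolding H_def using e \<open>Z \<omega> = 0\<close> by linarith
  next
    assume "ind \<omega> = 1"
    then show ?thesis unfolding H_def Z_def by simp
  qed
  have Hpos: "0 \<le> H \<omega>" for \<omega> using ptw[of \<omega>] exp_gt_zero[of "Z \<omega>"] by linarith
  have step1: "(\<integral>\<^sup>+ \<omega>. ennreal (exp (\<Sum>i<p. t' i * (avec p u b \<omega> i - Mi i))) \<partial>J)
      \<le> ennreal (exp (-m) * (exp q + m))"
  proof -
    have "(\<integral>\<^sup>+ \<omega>. ennreal (exp (\<Sum>i<p. t' i * (avec p u b \<omega> i - Mi i))) \<partial>J)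
        = (\<integral>\<^sup>+ \<omega>. ennreal (exp (Z \<omega> - m)) \<partial>J)" unfolding key1 ..
    also have "\<dots> \<le> (\<integral>\<^sup>+ \<omega>. ennreal (exp (-m) * H \<omega>) \<partial>J)"
    proof (intro nn_integral_mono ennreal_leI)
      fix \<omega>
      have "exp (Z \<omega> - m) = exp (-m) * exp (Z \<omega>)" by (simp add: exp_diff exp_minus field_simps)
      also have "\<dots> \<le> exp (-m) * H \<omega>" using ptw[of \<omega>] by simp
      finally show "exp (Z \<omega> - m) \<le> exp (-m) * H \<omega>" .
    qed
    also have "\<dots> = ennreal (\<integral>\<omega>. exp (-m) * H \<omega> \<partial>J)"
      by (rule nn_integral_eq_integral) (use iH Hpos in auto)
    also have "(\<integral>\<omega>. exp (-m) * H \<omega> \<partial>J) = exp (-m) * (exp q + m)" using eH by simp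
    finally show ?thesis .
  qed
  define A where "A = (\<integral>x. \<bar>b * z x\<bar> \<partial>G)"
  have mabs: "(\<lambda>x. \<bar>b * z x\<bar>) \<in> borel_measurable G" using mz by measurable
  have mA: "\<bar>m\<bar> \<le> A"
  proof -
    have "\<bar>m\<bar> \<le> (\<integral>\<omega>. norm (Z \<omega>) \<partial>J)" unfolding mZ using integral_norm_bound[of J Z] by simp
    also have "\<dots> \<le> (\<integral>\<omega>. \<bar>b * z (fst \<omega>)\<bar> \<partial>J)"
    proof (rule integral_mono)
      show "integrable J (\<lambda>\<omega>. norm (Z \<omega>))" using iZ by auto
      show "integrable J (\<lambda>\<omega>. \<bar>b * z (fst \<omega>)\<bar>)" using izJ by auto
      show "norm (Z \<omega>) \<le> \<bar>b * z (fst \<omega>)\<bar>" for \<omega>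
        using ind01[of \<omega>] unfolding Z_def by (auto simp: abs_mult)
    qed
    also have "\<dots> = A" unfolding A_def using trE[OF mabs] .
    finally show ?thesis .
  qed
  have iexpG: "integrable G (\<lambda>x. exp (l * z x))" for l
    using trI[OF mexp] iexpJ by simp
  have iabsG: "integrable G (\<lambda>x. \<bar>b * z x\<bar>)" using izG by auto
  have iexpabs: "integrable G (\<lambda>x. exp \<bar>b * z x\<bar>)"
  proof (rule Bochner_Integration.integrable_bound[OF Bochner_Integration.integrable_add[OF iexpG[of b] iexpG[of "-b"]]])
    show "(\<lambda>x. exp \<bar>b * z x\<bar>) \<in> borel_measurable G" using mz by measurable
    show "AE x in G. norm (exp \<bar>b * z x\<bar>) \<le> norm (exp (b * z x) + exp (- b * z x))"
    proof (rule AE_I2)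
      fix x
      have p1: "0 < exp (b * z x)" "0 < exp (- b * z x)" by simp_all
      have "exp \<bar>b * z x\<bar> \<le> exp (b * z x) + exp (- b * z x)"
        using p1 by (cases "0 \<le> b * z x") (simp_all add: abs_if)
      then show "norm (exp \<bar>b * z x\<bar>) \<le> norm (exp (b * z x) + exp (- b * z x))"
        using p1 by simp
    qed
  qed
  have eA: "exp A \<le> 2 * exp q"
  proof -
    have "exp A = (\<integral>x. exp A * (1 + \<bar>b * z x\<bar> - A) \<partial>G)"
      using iabsG unfolding A_def by (simp add: G.prob_space)
    also have "\<dots> \<le> (\<integral>x. exp \<bar>b * z x\<bar> \<partial>G)"
    proof (rule integral_mono)
      show "integrable G (\<lambda>x. exp A * (1 + \<bar>b * z x\<bar> - A))" using iabsG by auto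
      show "integrable G (\<lambda>x. exp \<bar>b * z x\<bar>)" by (rule iexpabs)
      fix x
      have "1 + (\<bar>b * z x\<bar> - A) \<le> exp (\<bar>b * z x\<bar> - A)" by (rule exp_ge_add_one_self)
      then have "exp A * (1 + (\<bar>b * z x\<bar> - A)) \<le> exp A * exp (\<bar>b * z x\<bar> - A)" by simp
      then show "exp A * (1 + \<bar>b * z x\<bar> - A) \<le> exp \<bar>b * z x\<bar>" by (simp add: exp_diff add_diff_eq)
    qed
    also have "\<dots> \<le> (\<integral>x. exp (b * z x) + exp (-b * z x) \<partial>G)"
    proof (rule integral_mono)
      show "integrable G (\<lambda>x. exp (b * z x) + exp (-b * z x))"
        by (rule Bochner_Integration.integrable_add[OF iexpG[of b] iexpG[of "-b"]])
      show "integrable G (\<lambda>x. exp \<bar>b * z x\<bar>)" by (rule iexpabs)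
      show "exp \<bar>b * z x\<bar> \<le> exp (b * z x) + exp (-b * z x)" for x
      proof -
        have p1: "0 < exp (b * z x)" "0 < exp (- b * z x)" by simp_all
        then show ?thesis by (cases "0 \<le> b * z x") (simp_all add: abs_if)
      qed
    qed
    also have "\<dots> = (\<integral>x. exp (b * z x) \<partial>G) + (\<integral>x. exp (-b * z x) \<partial>G)"
      by (rule Bochner_Integration.integral_add[OF iexpG[of b] iexpG[of "-b"]])
    also have "\<dots> = 2 * exp q"
      using eexpG[of b] eexpG[of "-b"] unfolding q_def by simp
    finally show ?thesis .
  qed
  have fin: "exp (-m) * (exp q + m) \<le> exp (4 * q)" by (rule final_ineq[OF q_nn mA eA])
  have np: "(norm_p p t')\<^sup>2 = \<sigma>2" unfolding norm_p_def \<sigma>2_def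
    by (rule real_sqrt_pow2) (intro sum_nonneg, auto)
  have "4 * b\<^sup>2 * (norm_p p t')\<^sup>2 / 2 = 4 * q" unfolding np q_def by simp
  then show "(\<integral>\<^sup>+ \<omega>. ennreal (exp (\<Sum>i<p. t' i *
          (avec p u b \<omega> i - (\<integral>\<omega>'. avec p u b \<omega>' i \<partial>joint_law p s t)))) \<partial>joint_law p s t)
       \<le> ennreal (exp (4 * b\<^sup>2 * (norm_p p t')\<^sup>2 / 2))"
    using step1 fin unfolding Mi_def J_def
    by (metis (no_types, lifting) order_trans ennreal_leI)
qed


end
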